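(* Let $\mathrm{opt}$ be the cost of an optimal solution and $\mathrm{opt}_{LP}$ the optimum value of the linear program LP-CVRP-MD described in the context, and let $(x,z)$ be an optimal solution of that LP. Define $\delta$ by $\sum_{r \in R}\sum_{v \in C} 2\,c(v,r)\, z^r_{v,v} = (1-\delta)\,\mathrm{opt}_{LP}$. Then $\mathrm{opt}_{LP} \le \mathrm{opt}$ and $\mathrm{lb} \le (1-\delta)\,\mathrm{opt}_{LP}$, where $\mathrm{lb} = \frac{2}{k}\sum_{v \in C} c(v,R)$.
   Context: Problem (Capacitated Vehicle Routing with Multiple Depots): nonempty disjoint finite sets $C$ (clients) and $R$ (depots), $V = C \cup R$, a metric $c$ on $V$, and an integer capacity $k \ge 1$. A feasible solution is a collection of tours, each starting and ending at a depot and visiting at most $k$ clients, such that every client is on some tour; its cost is the total edge cost; $\mathrm{opt}$ is the minimum cost. It is assumed that $c(v,R) := \min_{r \in R} c(v,r) > 0$ for every client $v$. Consider the complete bidirected graph on $V$ (each unordered pair $\{a,b\}$ gives directed edges $(a,b)$ and $(b,a)$, each of cost $c(a,b)$). For a vector $y$ on directed edges and $S \subseteq V$, $y(\delta^{in}(S))$ and $y(\delta^{out}(S))$ denote the sums of $y$ over directed edges entering, resp. leaving, $S$ (for a single vertex $u$ write $\delta^{in}(u)$, $\delta^{out}(u)$). LP-CVRP-MD has variables $x^r_{v,e} \ge 0$ for $r \in R$, $v \in C$, directed edges $e$, and $z^r_{v,u} \ge 0$ for $r \in R$, $v \in C$, $u \in V$; write $x^r_v$ for the vector $(x^r_{v,e})_e$.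 It minimizes $\sum_{r \in R}\sum_{v \in C}\sum_e c(e)\, x^r_{v,e}$ subject to: (1) for all $r \in R$, $v \in C$, $u \in V$: $x^r_v(\delta^{out}(u))$ equals $2 z^r_{v,v}$ if $u = r$, equals $0$ if $u = v$, and equals $z^r_{v,u}$ otherwise; (2) for all $r \in R$, $v \in C$, $u \in V$: $x^r_v(\delta^{in}(u))$ equals $0$ if $u = r$, equals $2 z^r_{v,v}$ if $u = v$, and equals $z^r_{v,u}$ otherwise; (3) $x^r_v(\delta^{in}(S)) \ge z^r_{v,u}$ for all $r \in R$, $v \in C$, $u \in V$ and all $S$ with $u \in S \subseteq V \setminus \{r\}$; (4) $\sum_{r \in R}\sum_{v \in C} z^r_{v,u} = 1$ for every client $u \in C$; (5) $z^r_{v,u} \le z^r_{v,v}$ for all $r \in R$, $u,v \in C$; (6) $z^r_{v,u} = 0$ for all $r \in R$, $u,v \in C$ with $c(u,r) > c(v,r)$; (7) $\sum_{u \in C} z^r_{v,u} \le k\, z^r_{v,v}$ for all $r \in R$, $v \in C$. Its optimum value is $\mathrm{opt}_{LP}$. *)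

theory Defs
  imports "HOL-Analysis.Analysis"
begin

definition metric_on :: "'a set \<Rightarrow> ('a \<Rightarrow> 'a \<Rightarrow> real) \<Rightarrow> bool" where
  "metric_on V c \<longleftrightarrow>
     (\<forall>a\<in>V. c a a = 0) \<and>
     (\<forall>a\<in>V. \<forall>b\<in>V. 0 \<le> c a b \<and> c a b = c b a) \<and>
     (\<forall>a\<in>V. \<forall>b\<in>V. \<forall>d\<in>V. c a d \<le> c a b + c b d)"

definition dist_set :: "('a \<Rightarrow> 'a \<Rightarrow> real) \<Rightarrow> 'a \<Rightarrow> 'a set \<Rightarrow> real" where
  "dist_set c v R = Min ((\<lambda>r. c v r) ` R)"

fun walk_cost :: "('a \<Rightarrow> 'a \<Rightarrow> real) \<Rightarrow> 'a list \<Rightarrow> real" where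
  "walk_cost c (a # b # xs) = c a b + walk_cost c (b # xs)"
| "walk_cost c _ = 0"

text \<open>A tour is a depot r together with the sequence of clients visited;
  it is the closed walk r, v1, ..., vm, r.\<close>
definition tour_cost :: "('a \<Rightarrow> 'a \<Rightarrow> real) \<Rightarrow> 'a \<times> 'a list \<Rightarrow> real" where
  "tour_cost c t = walk_cost c (fst t # snd t @ [fst t])"

definition cvrp_feasible ::
  "'a set \<Rightarrow> 'a set \<Rightarrow> nat \<Rightarrow> ('a \<times> 'a list) list \<Rightarrow> bool" where
  "cvrp_feasible C R k T \<longleftrightarrow>
     (\<forall>t\<in>set T. fst t \<in> R \<and> set (snd t) \<subseteq> C \<and> card (set (snd t)) \<le> k) \<and>
     (\<forall>u\<in>C. \<exists>t\<in>set T. u \<in> set (snd t))"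

definition sol_cost :: "('a \<Rightarrow> 'a \<Rightarrow> real) \<Rightarrow> ('a \<times> 'a list) list \<Rightarrow> real" where
  "sol_cost c T = (\<Sum>t\<leftarrow>T. tour_cost c t)"

definition cvrp_opt :: "'a set \<Rightarrow> 'a set \<Rightarrow> ('a \<Rightarrow> 'a \<Rightarrow> real) \<Rightarrow> nat \<Rightarrow> real" where
  "cvrp_opt C R c k = Inf (sol_cost c ` {T. cvrp_feasible C R k T})"

definition dedges :: "'a set \<Rightarrow> ('a \<times> 'a) set" where
  "dedges V = {(a, b). a \<in> V \<and> b \<in> V \<and> a \<noteq> b}"

definition delta_in :: "'a set \<Rightarrow> 'a set \<Rightarrow> ('a \<times> 'a) set" where
  "delta_in V S = {(a, b) \<in> dedges V. a \<notin> S \<and> b \<in> S}"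

definition delta_out :: "'a set \<Rightarrow> 'a set \<Rightarrow> ('a \<times> 'a) set" where
  "delta_out V S = {(a, b) \<in> dedges V. a \<in> S \<and> b \<notin> S}"

text \<open>x r v e = x^r_{v,e};  z r v u = z^r_{v,u}.\<close>
definition lp_feasible ::
  "'a set \<Rightarrow> 'a set \<Rightarrow> ('a \<Rightarrow> 'a \<Rightarrow> real) \<Rightarrow> nat \<Rightarrow>
   ('a \<Rightarrow> 'a \<Rightarrow> 'a \<times> 'a \<Rightarrow> real) \<Rightarrow> ('a \<Rightarrow> 'a \<Rightarrow> 'a \<Rightarrow> real) \<Rightarrow> bool" where
  "lp_feasible C R c k x z \<longleftrightarrow>
     (let V = C \<union> R in
     (\<forall>r\<in>R. \<forall>v\<in>C. \<forall>e\<in>dedges V. 0 \<le> x r v e) \<and>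
     (\<forall>r\<in>R. \<forall>v\<in>C. \<forall>u\<in>V. 0 \<le> z r v u) \<and>
     \<comment> \<open>(1)\<close>
     (\<forall>r\<in>R. \<forall>v\<in>C. \<forall>u\<in>V.
        (\<Sum>e\<in>delta_out V {u}. x r v e) =
          (if u = r then 2 * z r v v else if u = v then 0 else z r v u)) \<and>
     \<comment> \<open>(2)\<close>
     (\<forall>r\<in>R. \<forall>v\<in>C. \<forall>u\<in>V.
        (\<Sum>e\<in>delta_in V {u}. x r v e) =
          (if u = r then 0 else if u = v then 2 * z r v v else z r v u)) \<and>
     \<comment> \<open>(3)\<close>
     (\<forall>r\<in>R. \<forall>v\<in>C. \<forall>u\<in>V. \<forall>S. u \<in> S \<and> S \<subseteq> V - {r} \<longrightarrow>
        (\<Sum>e\<in>delta_in V S. x r v e) \<ge> z r v u) \<and>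
     \<comment> \<open>(4)\<close>
     (\<forall>u\<in>C. (\<Sum>r\<in>R. \<Sum>v\<in>C. z r v u) = 1) \<and>
     \<comment> \<open>(5)\<close>
     (\<forall>r\<in>R. \<forall>u\<in>C. \<forall>v\<in>C. z r v u \<le> z r v v) \<and>
     \<comment> \<open>(6)\<close>
     (\<forall>r\<in>R. \<forall>u\<in>C. \<forall>v\<in>C. c u r > c v r \<longrightarrow> z r v u = 0) \<and>
     \<comment> \<open>(7)\<close>
     (\<forall>r\<in>R. \<forall>v\<in>C. (\<Sum>u\<in>C. z r v u) \<le> real k * z r v v))"

definition lp_cost ::
  "'a set \<Rightarrow> 'a set \<Rightarrow> ('a \<Rightarrow> 'a \<Rightarrow> real) \<Rightarrow> ('a \<Rightarrow> 'a \<Rightarrow> 'a \<times> 'a \<Rightarrow> real) \<Rightarrow> real" where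
  "lp_cost C R c x = (\<Sum>r\<in>R. \<Sum>v\<in>C. \<Sum>e\<in>dedges (C \<union> R). c (fst e) (snd e) * x r v e)"

definition lp_opt :: "'a set \<Rightarrow> 'a set \<Rightarrow> ('a \<Rightarrow> 'a \<Rightarrow> real) \<Rightarrow> nat \<Rightarrow> real" where
  "lp_opt C R c k = Inf {lp_cost C R c x | x z. lp_feasible C R c k x z}"

definition lp_optimal ::
  "'a set \<Rightarrow> 'a set \<Rightarrow> ('a \<Rightarrow> 'a \<Rightarrow> real) \<Rightarrow> nat \<Rightarrow>
   ('a \<Rightarrow> 'a \<Rightarrow> 'a \<times> 'a \<Rightarrow> real) \<Rightarrow> ('a \<Rightarrow> 'a \<Rightarrow> 'a \<Rightarrow> real) \<Rightarrow> bool" where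
  "lp_optimal C R c k x z \<longleftrightarrow> lp_feasible C R c k x z \<and>
     (\<forall>x' z'. lp_feasible C R c k x' z' \<longrightarrow> lp_cost C R c x \<le> lp_cost C R c x')"

end

theory Submission imports Defs "HOL-Library.Sublist" begin

lemma metric_facts:
  assumes "metric_on V c"
  shows "a\<in>V \<Longrightarrow> c a a = 0" "a\<in>V \<Longrightarrow> b\<in>V \<Longrightarrow> 0 \<le> c a b"
    "a\<in>V \<Longrightarrow> b\<in>V \<Longrightarrow> c a b = c b a"
    "a\<in>V \<Longrightarrow> b\<in>V \<Longrightarrow> d\<in>V \<Longrightarrow> c a d \<le> c a b + c b d"
  using assms unfolding metric_on_def by auto

lemma walk_split: "walk_cost c (xs @ v # ys) = walk_cost c (xs @ [v]) + walk_cost c (v # ys)"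
proof (induction xs)
  case Nil then show ?case by simp
next
  case (Cons x xs) then show ?case by (cases xs) auto
qed

lemma walk_rev:
  assumes "metric_on V c" shows "set A \<subseteq> V \<Longrightarrow> walk_cost c (rev A) = walk_cost c A"
proof (induction A rule: induct_list012)
  case (3 x y zs)
  have "walk_cost c (rev (x#y#zs)) = walk_cost c (rev zs @ y # [x])" by simp
  also have "\<dots> = walk_cost c (rev (y#zs)) + c y x" by (subst walk_split) simp
  also have "\<dots> = walk_cost c (y#zs) + c x y" using 3 metric_facts(3)[OF assms] by auto
  finally show ?case by simp
qed auto

lemma walk_sum: "walk_cost c A = sum_list (map (\<lambda>e. c (fst e) (snd e)) (zip A (tl A)))"
  by (induction A rule: induct_list012) auto

lemma walk_tri:
  assumes "metric_on V c" shows "set xs \<subseteq> V \<Longrightarrow> a\<in>V \<Longrightarrow> b\<in>V \<Longrightarrow> c a b \<le> walk_cost c (a # xs @ [b])"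
proof (induction xs arbitrary: a)
  case (Cons x xs)
  then have "c x b \<le> walk_cost c (x # xs @ [b])" by auto
  moreover have "c a b \<le> c a x + c x b" using metric_facts(4)[OF assms] Cons by auto
  ultimately show ?case by simp
qed simp

lemma walk_subseq:
  assumes "metric_on V c"
  shows "subseq ys xs \<Longrightarrow> set xs \<subseteq> V \<Longrightarrow> set ys \<subseteq> V \<Longrightarrow> a \<in> V \<Longrightarrow> b \<in> V \<Longrightarrow>
    walk_cost c (a # ys @ [b]) \<le> walk_cost c (a # xs @ [b])"
proof (induction arbitrary: a rule: list_emb.induct)
  case (list_emb_Nil ys)
  then show ?case using walk_tri[OF assms, of ys a b] by simp
next
  case (list_emb_Cons xs ys y)
  then have IH: "walk_cost c (y # xs @ [b]) \<le> walk_cost c (y # ys @ [b])" by auto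
  obtain z zs where zz: "xs @ [b] = z # zs" by (cases "xs @ [b]") auto
  have "z \<in> V" using zz list_emb_Cons by (cases xs) auto
  then have "c a z \<le> c a y + c y z" using metric_facts(4)[OF assms] list_emb_Cons by auto
  then have "walk_cost c (a # xs @ [b]) \<le> c a y + walk_cost c (y # xs @ [b])" using zz by simp
  then show ?case using IH by simp
next
  case (list_emb_Cons2 x y xs ys)
  then show ?case by auto
qed

lemma subseq_remdups: "subseq (remdups xs) xs"
  by (induction xs) auto

lemma pedges_dedges: "distinct A \<Longrightarrow> set A \<subseteq> V \<Longrightarrow> e \<in> set (zip A (tl A)) \<Longrightarrow> e \<in> dedges V"
  by (induction A rule: induct_list012) (auto simp: dedges_def)

lemma pedges_out: "distinct A \<Longrightarrow> length (filter (\<lambda>e. fst e = u) (zip A (tl A))) = (if u \<in> set (butlast A) then 1 else 0)"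
proof (induction A rule: induct_list012)
  case (3 x y zs)
  have "u \<in> set (butlast (x#y#zs)) \<longleftrightarrow> u = x \<or> u \<in> set (butlast (y#zs))" by simp
  moreover have "x \<notin> set (butlast (y#zs))" using 3(3) by (auto dest: in_set_butlastD)
  moreover have "zip (x#y#zs) (tl (x#y#zs)) = (x,y) # zip (y#zs) (tl (y#zs))" by simp
  ultimately show ?case using 3 by (auto simp del: zip_Cons_Cons butlast.simps)
qed auto

lemma pedges_in: "distinct A \<Longrightarrow> length (filter (\<lambda>e. snd e = u) (zip A (tl A))) = (if u \<in> set (tl A) then 1 else 0)"
  by (induction A rule: induct_list012) auto

lemma sum_count: "finite D \<Longrightarrow> (\<Sum>e\<in>D. f e * real (count_list E e)) = sum_list (map f (filter (\<lambda>e. e \<in> D) E))"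
proof (induction E)
  case Nil then show ?case by simp
next
  case (Cons x E)
  have "(\<Sum>e\<in>D. f e * real (count_list (x#E) e)) = (\<Sum>e\<in>D. f e * real (count_list E e) + (if e = x then f e else 0))"
    by (rule sum.cong) (auto simp: algebra_simps)
  also have "\<dots> = (\<Sum>e\<in>D. f e * real (count_list E e)) + (if x \<in> D then f x else 0)"
    by (simp add: sum.distrib sum.delta' Cons.prems)
  finally show ?case using Cons by simp
qed

lemma cut_edge: "hd A \<notin> S \<Longrightarrow> w \<in> set A \<Longrightarrow> w \<in> S \<Longrightarrow> \<exists>a b. (a,b) \<in> set (zip A (tl A)) \<and> a \<notin> S \<and> b \<in> S"
proof (induction A rule: induct_list012)
  case (3 x y zs)
  show ?case
  proof (cases "y \<in> S")
    case True then show ?thesis using 3 by auto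
  next
    case False
    then obtain a b where "(a,b) \<in> set (zip (y#zs) (tl (y#zs)))" "a \<notin> S" "b \<in> S" using 3 by auto
    then show ?thesis by auto
  qed
qed auto

lemma fin_delta_out: "finite V \<Longrightarrow> finite (delta_out V S)"
  by (rule finite_subset[of _ "V \<times> V"]) (auto simp: delta_out_def dedges_def)
lemma fin_delta_in: "finite V \<Longrightarrow> finite (delta_in V S)"
  by (rule finite_subset[of _ "V \<times> V"]) (auto simp: delta_in_def dedges_def)
lemma fin_dedges: "finite V \<Longrightarrow> finite (dedges V)"
  by (rule finite_subset[of _ "V \<times> V"]) (auto simp: dedges_def)

lemma deg_out:
  assumes "distinct A" "set A \<subseteq> V" "finite V"
  shows "(\<Sum>e\<in>delta_out V {u}. real (count_list (zip A (tl A)) e)) = (if u \<in> set (butlast A) then 1 else 0)"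
proof -
  have "(\<Sum>e\<in>delta_out V {u}. real (count_list (zip A (tl A)) e))
     = (\<Sum>e\<in>delta_out V {u}. 1 * real (count_list (zip A (tl A)) e))" by simp
  also have "\<dots> = sum_list (map (\<lambda>_. 1) (filter (\<lambda>e. e \<in> delta_out V {u}) (zip A (tl A))))"
    by (rule sum_count[OF fin_delta_out[OF assms(3)]])
  also have "filter (\<lambda>e. e \<in> delta_out V {u}) (zip A (tl A)) = filter (\<lambda>e. fst e = u) (zip A (tl A))"
    apply (rule filter_cong[OF refl]) using pedges_dedges[OF assms(1,2)] by (auto simp: delta_out_def dedges_def) blast
  finally show ?thesis using pedges_out[OF assms(1), of u] by (simp add: sum_list_triv)
qed

lemma deg_in:
  assumes "distinct A" "set A \<subseteq> V" "finite V"
  shows "(\<Sum>e\<in>delta_in V {u}. real (count_list (zip A (tl A)) e)) = (if u \<in> set (tl A) then 1 else 0)"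
proof -
  have "(\<Sum>e\<in>delta_in V {u}. real (count_list (zip A (tl A)) e))
     = (\<Sum>e\<in>delta_in V {u}. 1 * real (count_list (zip A (tl A)) e))" by simp
  also have "\<dots> = sum_list (map (\<lambda>_. 1) (filter (\<lambda>e. e \<in> delta_in V {u}) (zip A (tl A))))"
    by (rule sum_count[OF fin_delta_in[OF assms(3)]])
  also have "filter (\<lambda>e. e \<in> delta_in V {u}) (zip A (tl A)) = filter (\<lambda>e. snd e = u) (zip A (tl A))"
    apply (rule filter_cong[OF refl]) using pedges_dedges[OF assms(1,2)] by (auto simp: delta_in_def dedges_def)
  finally show ?thesis using pedges_in[OF assms(1), of u] by (simp add: sum_list_triv)
qed

lemma cost_path:
  assumes "distinct A" "set A \<subseteq> V" "finite V"
  shows "(\<Sum>e\<in>dedges V. c (fst e) (snd e) * real (count_list (zip A (tl A)) e)) = walk_cost c A"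
proof -
  have "(\<Sum>e\<in>dedges V. c (fst e) (snd e) * real (count_list (zip A (tl A)) e))
     = sum_list (map (\<lambda>e. c (fst e) (snd e)) (filter (\<lambda>e. e \<in> dedges V) (zip A (tl A))))"
    by (rule sum_count[OF fin_dedges[OF assms(3)]])
  also have "filter (\<lambda>e. e \<in> dedges V) (zip A (tl A)) = zip A (tl A)"
    using pedges_dedges[OF assms(1,2)] by (simp add: filter_id_conv)
  finally show ?thesis by (simp add: walk_sum)
qed

lemma cut_flow:
  assumes "distinct A" "set A \<subseteq> V" "finite V" "hd A \<notin> S" "w \<in> set A" "w \<in> S"
  shows "1 \<le> (\<Sum>e\<in>delta_in V S. real (count_list (zip A (tl A)) e))"
proof -
  obtain a b where ab: "(a,b) \<in> set (zip A (tl A))" "a \<notin> S" "b \<in> S" using cut_edge assms(4-6) by metis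
  have "(a,b) \<in> delta_in V S" using pedges_dedges[OF assms(1,2) ab(1)] ab by (auto simp: delta_in_def)
  moreover have "1 \<le> count_list (zip A (tl A)) (a,b)" using ab(1) count_list_0_iff
    by (metis less_one not_le)
  ultimately show ?thesis
    using member_le_sum[of "(a,b)" "delta_in V S" "\<lambda>e. real (count_list (zip A (tl A)) e)"] fin_delta_in[OF assms(3)]
    by force
qed

definition lp_hom ::
  "'a set \<Rightarrow> 'a set \<Rightarrow> ('a \<Rightarrow> 'a \<Rightarrow> real) \<Rightarrow> nat \<Rightarrow>
   ('a \<Rightarrow> 'a \<Rightarrow> 'a \<times> 'a \<Rightarrow> real) \<Rightarrow> ('a \<Rightarrow> 'a \<Rightarrow> 'a \<Rightarrow> real) \<Rightarrow> bool" where
  "lp_hom C R c k x z \<longleftrightarrow>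
     (let V = C \<union> R in
     (\<forall>r\<in>R. \<forall>v\<in>C. \<forall>e\<in>dedges V. 0 \<le> x r v e) \<and>
     (\<forall>r\<in>R. \<forall>v\<in>C. \<forall>u\<in>V. 0 \<le> z r v u) \<and>
     (\<forall>r\<in>R. \<forall>v\<in>C. \<forall>u\<in>V.
        (\<Sum>e\<in>delta_out V {u}. x r v e) =
          (if u = r then 2 * z r v v else if u = v then 0 else z r v u)) \<and>
     (\<forall>r\<in>R. \<forall>v\<in>C. \<forall>u\<in>V.
        (\<Sum>e\<in>delta_in V {u}. x r v e) =
          (if u = r then 0 else if u = v then 2 * z r v v else z r v u)) \<and>
     (\<forall>r\<in>R. \<forall>v\<in>C. \<forall>u\<in>V. \<forall>S. u \<in> S \<and> S \<subseteq> V - {r} \<longrightarrow>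
        (\<Sum>e\<in>delta_in V S. x r v e) \<ge> z r v u) \<and>
     (\<forall>r\<in>R. \<forall>u\<in>C. \<forall>v\<in>C. z r v u \<le> z r v v) \<and>
     (\<forall>r\<in>R. \<forall>u\<in>C. \<forall>v\<in>C. c u r > c v r \<longrightarrow> z r v u = 0) \<and>
     (\<forall>r\<in>R. \<forall>v\<in>C. (\<Sum>u\<in>C. z r v u) \<le> real k * z r v v))"

lemma lp_feasible_hom: "lp_feasible C R c k x z \<longleftrightarrow> lp_hom C R c k x z \<and> (\<forall>u\<in>C. (\<Sum>r\<in>R. \<Sum>v\<in>C. z r v u) = 1)"
  unfolding lp_feasible_def lp_hom_def Let_def by argo

lemma lp_hom_zero: "lp_hom C R c k (\<lambda>_ _ _. 0) (\<lambda>_ _ _. 0)"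
  unfolding lp_hom_def Let_def by simp

lemma lp_hom_add:
  assumes "lp_hom C R c k x1 z1" "lp_hom C R c k x2 z2"
  shows "lp_hom C R c k (\<lambda>r v e. x1 r v e + x2 r v e) (\<lambda>r v u. z1 r v u + z2 r v u)"
proof -
  note h1 = assms(1)[unfolded lp_hom_def Let_def]
  note h2 = assms(2)[unfolded lp_hom_def Let_def]
  show ?thesis unfolding lp_hom_def Let_def
  proof (intro conjI ballI allI impI)
    fix r v e assume "r \<in> R" "v \<in> C" "e \<in> dedges (C \<union> R)"
    then show "0 \<le> x1 r v e + x2 r v e" using h1[THEN conjunct1] h2[THEN conjunct1] by (simp add: add_nonneg_nonneg)
  next
    fix r v u assume "r \<in> R" "v \<in> C" "u \<in> C \<union> R"
    then show "0 \<le> z1 r v u + z2 r v u" using h1[THEN conjunct2, THEN conjunct1] h2[THEN conjunct2, THEN conjunct1] by (simp add: add_nonneg_nonneg)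
  next
    fix r v u assume a: "r \<in> R" "v \<in> C" "u \<in> C \<union> R"
    have e1: "(\<Sum>e\<in>delta_out (C \<union> R) {u}. x1 r v e) = (if u = r then 2 * z1 r v v else if u = v then 0 else z1 r v u)"
      using h1[THEN conjunct2, THEN conjunct2, THEN conjunct1] a by blast
    have e2: "(\<Sum>e\<in>delta_out (C \<union> R) {u}. x2 r v e) = (if u = r then 2 * z2 r v v else if u = v then 0 else z2 r v u)"
      using h2[THEN conjunct2, THEN conjunct2, THEN conjunct1] a by blast
    show "(\<Sum>e\<in>delta_out (C \<union> R) {u}. x1 r v e + x2 r v e) = (if u = r then 2 * (z1 r v v + z2 r v v) else if u = v then 0 else z1 r v u + z2 r v u)"
      unfolding sum.distrib e1 e2 by simp
  next
    fix r v u assume a: "r \<in> R" "v \<in> C" "u \<in> C \<union> R"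
    have e1: "(\<Sum>e\<in>delta_in (C \<union> R) {u}. x1 r v e) = (if u = r then 0 else if u = v then 2 * z1 r v v else z1 r v u)"
      using h1[THEN conjunct2, THEN conjunct2, THEN conjunct2, THEN conjunct1] a by blast
    have e2: "(\<Sum>e\<in>delta_in (C \<union> R) {u}. x2 r v e) = (if u = r then 0 else if u = v then 2 * z2 r v v else z2 r v u)"
      using h2[THEN conjunct2, THEN conjunct2, THEN conjunct2, THEN conjunct1] a by blast
    show "(\<Sum>e\<in>delta_in (C \<union> R) {u}. x1 r v e + x2 r v e) = (if u = r then 0 else if u = v then 2 * (z1 r v v + z2 r v v) else z1 r v u + z2 r v u)"
      unfolding sum.distrib e1 e2 by simp
  next
    fix r v u S assume a: "r \<in> R" "v \<in> C" "u \<in> C \<union> R" "u \<in> S \<and> S \<subseteq> C \<union> R - {r}"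
    have e1: "(\<Sum>e\<in>delta_in (C \<union> R) S. x1 r v e) \<ge> z1 r v u" using h1[THEN conjunct2, THEN conjunct2, THEN conjunct2, THEN conjunct2, THEN conjunct1] a by blast
    have e2: "(\<Sum>e\<in>delta_in (C \<union> R) S. x2 r v e) \<ge> z2 r v u" using h2[THEN conjunct2, THEN conjunct2, THEN conjunct2, THEN conjunct2, THEN conjunct1] a by blast
    show "(\<Sum>e\<in>delta_in (C \<union> R) S. x1 r v e + x2 r v e) \<ge> z1 r v u + z2 r v u"
      unfolding sum.distrib using e1 e2 by simp
  next
    fix r u v assume a: "r \<in> R" "u \<in> C" "v \<in> C"
    then show "z1 r v u + z2 r v u \<le> z1 r v v + z2 r v v" using h1[THEN conjunct2, THEN conjunct2, THEN conjunct2, THEN conjunct2, THEN conjunct2, THEN conjunct1] h2[THEN conjunct2, THEN conjunct2, THEN conjunct2, THEN conjunct2, THEN conjunct2, THEN conjunct1] a by (simp add: add_mono)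
  next
    fix r u v assume a: "r \<in> R" "u \<in> C" "v \<in> C" "c u r > c v r"
    then show "z1 r v u + z2 r v u = 0" using h1[THEN conjunct2, THEN conjunct2, THEN conjunct2, THEN conjunct2, THEN conjunct2, THEN conjunct2, THEN conjunct1] h2[THEN conjunct2, THEN conjunct2, THEN conjunct2, THEN conjunct2, THEN conjunct2, THEN conjunct2, THEN conjunct1] a by simp
  next
    fix r v assume a: "r \<in> R" "v \<in> C"
    have e1: "(\<Sum>u\<in>C. z1 r v u) \<le> real k * z1 r v v" using h1[THEN conjunct2, THEN conjunct2, THEN conjunct2, THEN conjunct2, THEN conjunct2, THEN conjunct2, THEN conjunct2] a by blast
    have e2: "(\<Sum>u\<in>C. z2 r v u) \<le> real k * z2 r v v" using h2[THEN conjunct2, THEN conjunct2, THEN conjunct2, THEN conjunct2, THEN conjunct2, THEN conjunct2, THEN conjunct2] a by blast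
    show "(\<Sum>u\<in>C. z1 r v u + z2 r v u) \<le> real k * (z1 r v v + z2 r v v)"
      unfolding sum.distrib distrib_left using e1 e2 by simp
  qed
qed

lemma lp_cost_add: "lp_cost C R c (\<lambda>r v e. x1 r v e + x2 r v e) = lp_cost C R c x1 + lp_cost C R c x2"
  unfolding lp_cost_def by (simp add: distrib_left sum.distrib)

lemma double_delta:
  assumes "r \<in> R" "v \<in> C" "finite R" "finite C"
  shows "(\<Sum>r'\<in>R. \<Sum>v'\<in>C. if r' = r \<and> v' = v then (g::real) else 0) = g"
proof -
  have "\<And>r'. (\<Sum>v'\<in>C. if r' = r \<and> v' = v then g else 0) = (if r' = r then g else 0)"
    by (case_tac "r' = r") (simp_all add: assms)
  then show ?thesis using assms by (simp add: sum.delta')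
qed

lemma tour_lp:
  assumes fin: "finite C" "finite R" and disj: "C \<inter> R = {}" and met: "metric_on (C \<union> R) c"
    and r: "r \<in> R" and P: "set P \<subseteq> C" "distinct P" "card (set P) \<le> k"
  shows "\<exists>X Z. lp_hom C R c k X Z \<and>
     (\<forall>u\<in>C. (\<Sum>r'\<in>R. \<Sum>v'\<in>C. Z r' v' u) = (if u \<in> set P then 1 else 0)) \<and>
     lp_cost C R c X \<le> tour_cost c (r, P)"
proof (cases "P = []")
  case True
  have "c r r = 0" using metric_facts(1)[OF met] r by auto
  then have "tour_cost c (r, P) = 0" using True by (simp add: tour_cost_def)
  moreover have "lp_cost C R c (\<lambda>_ _ _. 0) = 0" by (simp add: lp_cost_def)
  ultimately show ?thesis using lp_hom_zero True by fastforce
next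
  case False
  define V where "V = C \<union> R"
  have finV: "finite V" using fin V_def by auto
  define m where "m = Max ((\<lambda>u. c u r) ` set P)"
  have "m \<in> (\<lambda>u. c u r) ` set P" unfolding m_def using False by (intro Max_in) auto
  then obtain v where v1: "v \<in> set P" and vm: "c v r = m" by auto
  have v2: "\<forall>u\<in>set P. c u r \<le> c v r" unfolding vm m_def by auto
  obtain P1 P2 where Ps: "P = P1 @ v # P2" using split_list[OF v1] by blast
  have dP: "v \<notin> set P1" "v \<notin> set P2" "set P1 \<inter> set P2 = {}" "distinct P1" "distinct P2"
    using P(2) Ps by auto
  have rP: "r \<notin> set P" using disj r P(1) by auto
  have vC: "v \<in> C" "v \<noteq> r" using v1 P(1) rP by auto
  define A where "A = r # P1 @ [v]"
  define B where "B = r # rev P2 @ [v]"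
  have dA: "distinct A" "set A \<subseteq> V" using dP rP Ps P(1) r unfolding A_def V_def by auto
  have dB: "distinct B" "set B \<subseteq> V" using dP rP Ps P(1) r unfolding B_def V_def by auto
  define f where "f e = real (count_list (zip A (tl A)) e) + real (count_list (zip B (tl B)) e)" for e
  have fnn: "0 \<le> f e" for e unfolding f_def by simp
  have outdeg: "(\<Sum>e\<in>delta_out V {u}. f e) = (if u = r then 2 else if u = v then 0 else if u \<in> set P then 1 else 0)" for u
  proof -
    have "(\<Sum>e\<in>delta_out V {u}. f e) = (if u \<in> set (butlast A) then 1 else 0) + (if u \<in> set (butlast B) then 1 else 0)"
      unfolding f_def sum.distrib deg_out[OF dA finV] deg_out[OF dB finV] ..
    also have "\<dots> = (if u = r then 2 else if u = v then 0 else if u \<in> set P then 1 else 0)"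
      unfolding A_def B_def using dP rP vC Ps by (auto simp: butlast_append)
    finally show ?thesis .
  qed
  have indeg: "(\<Sum>e\<in>delta_in V {u}. f e) = (if u = r then 0 else if u = v then 2 else if u \<in> set P then 1 else 0)" for u
  proof -
    have "(\<Sum>e\<in>delta_in V {u}. f e) = (if u \<in> set (tl A) then 1 else 0) + (if u \<in> set (tl B) then 1 else 0)"
      unfolding f_def sum.distrib deg_in[OF dA finV] deg_in[OF dB finV] ..
    also have "\<dots> = (if u = r then 0 else if u = v then 2 else if u \<in> set P then 1 else 0)"
      unfolding A_def B_def using dP rP vC Ps by auto
    finally show ?thesis .
  qed
  have cut: "1 \<le> (\<Sum>e\<in>delta_in V S. f e)" if "u \<in> set P" "u \<in> S" "S \<subseteq> V - {r}" for u S
  proof -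
    have n1: "0 \<le> (\<Sum>e\<in>delta_in V S. real (count_list (zip A (tl A)) e))"
      and n2: "0 \<le> (\<Sum>e\<in>delta_in V S. real (count_list (zip B (tl B)) e))" by (auto intro: sum_nonneg)
    have hS: "r \<notin> S" using that by auto
    have "u \<in> set A \<or> u \<in> set B" using that Ps unfolding A_def B_def by auto
    then show ?thesis
    proof
      assume "u \<in> set A"
      then have "1 \<le> (\<Sum>e\<in>delta_in V S. real (count_list (zip A (tl A)) e))"
        using cut_flow[OF dA finV, of S u] hS that unfolding A_def by auto
      then show ?thesis unfolding f_def sum.distrib using n2 by linarith
    next
      assume "u \<in> set B"
      then have "1 \<le> (\<Sum>e\<in>delta_in V S. real (count_list (zip B (tl B)) e))"
        using cut_flow[OF dB finV, of S u] hS that unfolding B_def by auto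
      then show ?thesis unfolding f_def sum.distrib using n1 by linarith
    qed
  qed
  have cost: "(\<Sum>e\<in>dedges V. c (fst e) (snd e) * f e) = tour_cost c (r, P)"
  proof -
    have "(\<Sum>e\<in>dedges V. c (fst e) (snd e) * f e) = walk_cost c A + walk_cost c B"
      unfolding f_def distrib_left sum.distrib cost_path[OF dA finV] cost_path[OF dB finV] ..
    also have "walk_cost c B = walk_cost c (rev B)"
      using walk_rev[OF met, of B] dB V_def by simp
    also have "rev B = v # P2 @ [r]" unfolding B_def by simp
    also have "walk_cost c A + walk_cost c (v # P2 @ [r]) = walk_cost c (r # P1 @ v # P2 @ [r])"
      unfolding A_def using walk_split[of c "r # P1" v "P2 @ [r]"] by simp
    finally show ?thesis unfolding tour_cost_def Ps by simp
  qed
  define X where "X = (\<lambda>r' v' e. if r' = r \<and> v' = v then f e else 0)"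
  define Z where "Z = (\<lambda>r' v' u. if r' = r \<and> v' = v then (if u \<in> set P then 1 else 0) else (0::real))"
  have hom: "lp_hom C R c k X Z"
    unfolding lp_hom_def Let_def V_def[symmetric]
  proof (intro conjI ballI allI impI)
    fix r' v' e show "0 \<le> X r' v' e" unfolding X_def using fnn by simp
  next
    fix r' v' u show "0 \<le> Z r' v' u" unfolding Z_def by simp
  next
    fix r' v' u assume "u \<in> V"
    show "(\<Sum>e\<in>delta_out V {u}. X r' v' e) = (if u = r' then 2 * Z r' v' v' else if u = v' then 0 else Z r' v' u)"
      using outdeg[of u] v1 unfolding X_def Z_def by auto
  next
    fix r' v' u assume "u \<in> V"
    show "(\<Sum>e\<in>delta_in V {u}. X r' v' e) = (if u = r' then 0 else if u = v' then 2 * Z r' v' v' else Z r' v' u)"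
      using indeg[of u] v1 unfolding X_def Z_def by auto
  next
    fix r' v' u S assume "u \<in> S \<and> S \<subseteq> V - {r'}"
    then show "(\<Sum>e\<in>delta_in V S. X r' v' e) \<ge> Z r' v' u"
      using cut[of u S] fnn unfolding X_def Z_def by (auto intro: sum_nonneg)
  next
    fix r' u v' show "Z r' v' u \<le> Z r' v' v'" unfolding Z_def using v1 by auto
  next
    fix r' u v' assume "c u r' > c v' r'"
    then show "Z r' v' u = 0" unfolding Z_def using v2 by force
  next
    fix r' v'
    have "(\<Sum>u\<in>C. if u \<in> set P then 1 else 0) = real (card (C \<inter> set P))"
      using fin(1) by (simp add: sum.If_cases)
    also have "C \<inter> set P = set P" using P(1) by auto
    finally have "(\<Sum>u\<in>C. if u \<in> set P then 1 else 0) \<le> real k" using P(3) by simp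
    then show "(\<Sum>u\<in>C. Z r' v' u) \<le> real k * Z r' v' v'" unfolding Z_def using v1 by auto
  qed
  have zsum: "\<forall>u\<in>C. (\<Sum>r'\<in>R. \<Sum>v'\<in>C. Z r' v' u) = (if u \<in> set P then 1 else 0)"
    unfolding Z_def using double_delta[OF r vC(1) fin(2,1)] by simp
  have "lp_cost C R c X = (\<Sum>r'\<in>R. \<Sum>v'\<in>C. if r' = r \<and> v' = v then (\<Sum>e\<in>dedges V. c (fst e) (snd e) * f e) else 0)"
    unfolding lp_cost_def V_def[symmetric] X_def by (intro sum.cong refl) auto
  also have "\<dots> = tour_cost c (r, P)" using double_delta[OF r vC(1) fin(2,1)] cost by simp
  finally have "lp_cost C R c X \<le> tour_cost c (r, P)" by simp
  then show ?thesis using hom zsum by blast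
qed

lemma list_lp:
  assumes fin: "finite C" "finite R" and disj: "C \<inter> R = {}" and met: "metric_on (C \<union> R) c"
  shows "(\<forall>t\<in>set L. fst t \<in> R \<and> set (snd t) \<subseteq> C \<and> distinct (snd t) \<and> card (set (snd t)) \<le> k) \<Longrightarrow>
    \<exists>X Z. lp_hom C R c k X Z \<and>
     (\<forall>u\<in>C. (\<Sum>r'\<in>R. \<Sum>v'\<in>C. Z r' v' u) = (\<Sum>t\<leftarrow>L. if u \<in> set (snd t) then 1 else 0)) \<and>
     lp_cost C R c X \<le> sol_cost c L"
proof (induction L)
  case Nil
  have "lp_cost C R c (\<lambda>_ _ _. 0) = 0" by (simp add: lp_cost_def)
  then show ?case using lp_hom_zero by (fastforce simp: sol_cost_def)
next
  case (Cons t L)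
  obtain X1 Z1 where h1: "lp_hom C R c k X1 Z1"
    "\<forall>u\<in>C. (\<Sum>r'\<in>R. \<Sum>v'\<in>C. Z1 r' v' u) = (if u \<in> set (snd t) then 1 else 0)"
    "lp_cost C R c X1 \<le> tour_cost c (fst t, snd t)"
    using tour_lp[OF fin disj met, of "fst t" "snd t" k] Cons.prems by auto
  obtain X2 Z2 where h2: "lp_hom C R c k X2 Z2"
    "\<forall>u\<in>C. (\<Sum>r'\<in>R. \<Sum>v'\<in>C. Z2 r' v' u) = (\<Sum>t\<leftarrow>L. if u \<in> set (snd t) then 1 else 0)"
    "lp_cost C R c X2 \<le> sol_cost c L"
    using Cons by auto
  have "lp_hom C R c k (\<lambda>r v e. X1 r v e + X2 r v e) (\<lambda>r v u. Z1 r v u + Z2 r v u)"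
    using lp_hom_add[OF h1(1) h2(1)] .
  moreover have "\<forall>u\<in>C. (\<Sum>r'\<in>R. \<Sum>v'\<in>C. Z1 r' v' u + Z2 r' v' u) = (\<Sum>t\<leftarrow>t#L. if u \<in> set (snd t) then 1 else 0)"
    using h1(2) h2(2) by (simp add: sum.distrib)
  moreover have "lp_cost C R c (\<lambda>r v e. X1 r v e + X2 r v e) \<le> sol_cost c (t#L)"
    using h1(3) h2(3) by (simp add: lp_cost_add sol_cost_def)
  ultimately show ?case by blast
qed

fun cleanT :: "('a \<times> 'a list) list \<Rightarrow> ('a \<times> 'a list) list" where
  "cleanT [] = []"
| "cleanT (t # T) = (fst t, remdups (filter (\<lambda>u. u \<notin> (\<Union>s\<in>set T. set (snd s))) (snd t))) # cleanT T"

lemma subseq_rf: "subseq (remdups (filter P xs)) xs"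
  by (induction xs) auto

lemma clean_props:
  "(\<forall>t\<in>set T. fst t \<in> R \<and> set (snd t) \<subseteq> C \<and> card (set (snd t)) \<le> k) \<Longrightarrow>
   (\<forall>t\<in>set (cleanT T). fst t \<in> R \<and> set (snd t) \<subseteq> C \<and> distinct (snd t) \<and> card (set (snd t)) \<le> k)"
proof (induction T)
  case (Cons t T)
  have "card (set (filter (\<lambda>u. u \<notin> (\<Union>s\<in>set T. set (snd s))) (snd t))) \<le> card (set (snd t))"
    by (intro card_mono) auto
  then show ?case using Cons by auto
qed simp

lemma clean_count:
  "(\<Sum>t\<leftarrow>cleanT T. if u \<in> set (snd t) then 1 else 0) = (if u \<in> (\<Union>s\<in>set T. set (snd s)) then 1 else (0::real))"
  by (induction T) auto

lemma clean_cost: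
  assumes met: "metric_on V c"
  shows "(\<forall>t\<in>set T. fst t \<in> V \<and> set (snd t) \<subseteq> V) \<Longrightarrow> sol_cost c (cleanT T) \<le> sol_cost c T"
proof (induction T)
  case Nil then show ?case by (simp add: sol_cost_def)
next
  case (Cons t T)
  have "tour_cost c (fst t, remdups (filter (\<lambda>u. u \<notin> (\<Union>s\<in>set T. set (snd s))) (snd t))) \<le> tour_cost c t"
    unfolding tour_cost_def fst_conv snd_conv using Cons.prems
    by (intro walk_subseq[OF met subseq_rf]) auto
  then show ?case using Cons by (simp add: sol_cost_def)
qed

theorem lemma2:
  fixes C R :: "'a set" and c :: "'a \<Rightarrow> 'a \<Rightarrow> real" and k :: nat
    and x :: "'a \<Rightarrow> 'a \<Rightarrow> 'a \<times> 'a \<Rightarrow> real" and z :: "'a \<Rightarrow> 'a \<Rightarrow> 'a \<Rightarrow> real"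
    and \<delta> :: real
  assumes "finite C" "finite R" "C \<noteq> {}" "R \<noteq> {}" "C \<inter> R = {}"
    and "metric_on (C \<union> R) c"
    and "k \<ge> 1"
    and "\<forall>v\<in>C. dist_set c v R > 0"
    and "lp_optimal C R c k x z"
    and "(\<Sum>r\<in>R. \<Sum>v\<in>C. 2 * c v r * z r v v) = (1 - \<delta>) * lp_opt C R c k"
  shows "lp_opt C R c k \<le> cvrp_opt C R c k
       \<and> 2 / real k * (\<Sum>v\<in>C. dist_set c v R) \<le> (1 - \<delta>) * lp_opt C R c k"
proof
  have feas: "lp_feasible C R c k x z" and optx: "\<And>x' z'. lp_feasible C R c k x' z' \<Longrightarrow> lp_cost C R c x \<le> lp_cost C R c x'"
    using assms(9) unfolding lp_optimal_def by auto
  have lpopt: "lp_opt C R c k = lp_cost C R c x"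
    unfolding lp_opt_def by (rule cInf_eq_minimum) (use feas optx in auto)
  note met = assms(6)
  have cnn: "0 \<le> c v r" if "v \<in> C" "r \<in> R" for v r using metric_facts(2)[OF met] that by auto
  show "lp_opt C R c k \<le> cvrp_opt C R c k"
    unfolding cvrp_opt_def
  proof (rule cInf_greatest)
    obtain r0 where r0: "r0 \<in> R" using assms(4) by auto
    obtain xs where xs: "set xs = C" using finite_list[OF assms(1)] by auto
    have "cvrp_feasible C R k (map (\<lambda>u. (r0, [u])) xs)"
      unfolding cvrp_feasible_def using r0 xs assms(7) by auto
    then show "sol_cost c ` {T. cvrp_feasible C R k T} \<noteq> {}" by auto
  next
    fix s assume "s \<in> sol_cost c ` {T. cvrp_feasible C R k T}"
    then obtain T where T: "cvrp_feasible C R k T" and s: "s = sol_cost c T" by auto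
    have Tp: "\<forall>t\<in>set T. fst t \<in> R \<and> set (snd t) \<subseteq> C \<and> card (set (snd t)) \<le> k"
      and Tc: "\<forall>u\<in>C. \<exists>t\<in>set T. u \<in> set (snd t)" using T unfolding cvrp_feasible_def by auto
    obtain X Z where XZ: "lp_hom C R c k X Z"
      "\<forall>u\<in>C. (\<Sum>r'\<in>R. \<Sum>v'\<in>C. Z r' v' u) = (\<Sum>t\<leftarrow>cleanT T. if u \<in> set (snd t) then 1 else 0)"
      "lp_cost C R c X \<le> sol_cost c (cleanT T)"
      using list_lp[OF assms(1,2,5) met clean_props[OF Tp]] by blast
    have "\<forall>u\<in>C. (\<Sum>r'\<in>R. \<Sum>v'\<in>C. Z r' v' u) = 1"
      using XZ(2) Tc unfolding clean_count by auto
    then have "lp_feasible C R c k X Z" using XZ(1) lp_feasible_hom by blast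
    then have "lp_cost C R c x \<le> lp_cost C R c X" by (rule optx)
    also have "\<dots> \<le> sol_cost c (cleanT T)" by (rule XZ(3))
    also have "\<dots> \<le> sol_cost c T" using clean_cost[OF met] Tp by auto
    finally show "lp_opt C R c k \<le> s" using lpopt s by simp
  qed
next
  note met = assms(6)
  have feas: "lp_feasible C R c k x z" using assms(9) unfolding lp_optimal_def by auto
  have znn: "\<forall>r\<in>R. \<forall>v\<in>C. \<forall>u\<in>C. 0 \<le> z r v u"
    and z4: "\<forall>u\<in>C. (\<Sum>r\<in>R. \<Sum>v\<in>C. z r v u) = 1"
    and z6: "\<forall>r\<in>R. \<forall>u\<in>C. \<forall>v\<in>C. c u r > c v r \<longrightarrow> z r v u = 0"
    and z7: "\<forall>r\<in>R. \<forall>v\<in>C. (\<Sum>u\<in>C. z r v u) \<le> real k * z r v v"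
    using feas unfolding lp_feasible_def Let_def by auto
  have cnn: "0 \<le> c v r" if "v \<in> C" "r \<in> R" for v r using metric_facts(2)[OF met] that by auto
  define D where "D u = dist_set c u R" for u
  have Dle: "D u \<le> c u r" if "r \<in> R" for u r
    unfolding D_def dist_set_def using that assms(2) by (intro Min_le) auto
  have key: "z r v u * D u \<le> z r v u * c v r" if "r \<in> R" "v \<in> C" "u \<in> C" for r v u
  proof (cases "c u r > c v r")
    case True then show ?thesis using z6 that by simp
  next
    case False
    then have "D u \<le> c v r" using Dle[OF that(1), of u] by linarith
    then show ?thesis using znn that by (intro mult_left_mono) auto
  qed
  have "(\<Sum>u\<in>C. D u) = (\<Sum>u\<in>C. (\<Sum>r\<in>R. \<Sum>v\<in>C. z r v u) * D u)"
    using z4 by simp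
  also have "\<dots> = (\<Sum>u\<in>C. \<Sum>r\<in>R. \<Sum>v\<in>C. z r v u * D u)"
    by (simp add: sum_distrib_right)
  also have "\<dots> = (\<Sum>r\<in>R. \<Sum>u\<in>C. \<Sum>v\<in>C. z r v u * D u)" by (rule sum.swap)
  also have "\<dots> = (\<Sum>r\<in>R. \<Sum>v\<in>C. \<Sum>u\<in>C. z r v u * D u)" by (rule sum.cong[OF refl], rule sum.swap)
  also have "\<dots> \<le> (\<Sum>r\<in>R. \<Sum>v\<in>C. \<Sum>u\<in>C. z r v u * c v r)"
    using key by (intro sum_mono) auto
  also have "\<dots> = (\<Sum>r\<in>R. \<Sum>v\<in>C. c v r * (\<Sum>u\<in>C. z r v u))"
    by (simp add: sum_distrib_left mult.commute)
  also have "\<dots> \<le> (\<Sum>r\<in>R. \<Sum>v\<in>C. c v r * (real k * z r v v))"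
    using z7 cnn by (intro sum_mono mult_left_mono) auto
  finally have ineq: "(\<Sum>u\<in>C. D u) \<le> (\<Sum>r\<in>R. \<Sum>v\<in>C. c v r * (real k * z r v v))" .
  have kpos: "real k > 0" using assms(7) by simp
  have "2 / real k * (\<Sum>u\<in>C. D u) \<le> 2 / real k * (\<Sum>r\<in>R. \<Sum>v\<in>C. c v r * (real k * z r v v))"
    using ineq kpos by (intro mult_left_mono) auto
  also have "\<dots> = (\<Sum>r\<in>R. \<Sum>v\<in>C. 2 * c v r * z r v v)"
    using kpos by (simp add: sum_distrib_left mult.assoc)
  finally show "2 / real k * (\<Sum>v\<in>C. dist_set c v R) \<le> (1 - \<delta>) * lp_opt C R c k"
    using assms(10) unfolding D_def by simp
qed

end
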